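(* Let $p\ge 2$ be an integer, set $q=\lfloor p/2\rfloor$, let $G$ be a graph and $v$ a vertex of $G$ of degree $d(v)$. Then (i) $\mathrm{id}^{\leq p}(G)\le \mathrm{id}^{\leq p}(G-v)+\left\lceil\frac{d(v)}{p-1}\right\rceil$; and (ii) if $d(v)\ge q$, then $\mathrm{id}^{\leq p}(G)\le \mathrm{id}^{\leq p}(G-v)+\left\lfloor \frac{d(v)}{q}\right\rfloor$.
   Context: All graphs are finite and simple. For an oriented graph $D$ and $X\subseteq V(D)$, the inversion of $X$ reverses every arc with both endvertices in $X$; a $(\leq p)$-inversion is the inversion of a set of at most $p$ vertices. $\mathrm{id}^{\leq p}(G)$ is the maximum, over all ordered pairs $(\vec G_1,\vec G_2)$ of orientations of $G$, of the minimum number of $(\leq p)$-inversions transforming $\vec G_1$ into $\vec G_2$. *)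

theory Defs
  imports Complex_Main
begin

definition simple_graph :: "'a set \<Rightarrow> 'a set set \<Rightarrow> bool" where
  "simple_graph V E \<longleftrightarrow> finite V \<and> (\<forall>e\<in>E. e \<subseteq> V \<and> card e = 2)"

definition degree :: "'a set set \<Rightarrow> 'a \<Rightarrow> nat" where
  "degree E v = card {e\<in>E. v \<in> e}"

definition del_vertex_V :: "'a set \<Rightarrow> 'a \<Rightarrow> 'a set" where
  "del_vertex_V V v = V - {v}"

definition del_vertex_E :: "'a set set \<Rightarrow> 'a \<Rightarrow> 'a set set" where
  "del_vertex_E E v = {e\<in>E. v \<notin> e}"

definition is_orientation :: "'a set \<Rightarrow> 'a set set \<Rightarrow> ('a \<times> 'a) set \<Rightarrow> bool" where
  "is_orientation V E A \<longleftrightarrow>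
     (\<forall>(x,y)\<in>A. x \<noteq> y \<and> {x,y} \<in> E) \<and>
     (\<forall>x y. x \<noteq> y \<and> {x,y} \<in> E \<longrightarrow> ((x,y) \<in> A \<longleftrightarrow> (y,x) \<notin> A))"

definition invert :: "'a set \<Rightarrow> ('a \<times> 'a) set \<Rightarrow> ('a \<times> 'a) set" where
  "invert X A = {(x,y)\<in>A. \<not> (x \<in> X \<and> y \<in> X)} \<union> {(y,x) | x y. (x,y) \<in> A \<and> x \<in> X \<and> y \<in> X}"

definition inv_dist :: "nat \<Rightarrow> 'a set \<Rightarrow> ('a \<times> 'a) set \<Rightarrow> ('a \<times> 'a) set \<Rightarrow> nat" where
  "inv_dist p V A B = (LEAST k. \<exists>Xs. length Xs = k \<and> (\<forall>X\<in>set Xs. X \<subseteq> V \<and> card X \<le> p)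
                                  \<and> foldl (\<lambda>D X. invert X D) A Xs = B)"

definition inv_diam :: "nat \<Rightarrow> 'a set \<Rightarrow> 'a set set \<Rightarrow> nat" where
  "inv_diam p V E = Max {inv_dist p V A B | A B. is_orientation V E A \<and> is_orientation V E B}"

end

theory Submission
  imports Defs
begin

lemma invert_mem: "(x,y) \<in> invert X A \<longleftrightarrow> (if x\<in>X \<and> y\<in>X then (y,x)\<in>A else (x,y)\<in>A)"
  by (auto simp: invert_def)

definition cnt :: "'a set list \<Rightarrow> 'a \<Rightarrow> 'a \<Rightarrow> nat" where
  "cnt Xs x y = length (filter (\<lambda>X. x\<in>X \<and> y\<in>X) Xs)"

lemma fold_mem: "(x,y) \<in> foldl (\<lambda>D X. invert X D) A Xs \<longleftrightarrow>
   (if odd (cnt Xs x y) then (y,x)\<in>A else (x,y)\<in>A)"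
proof (induction Xs arbitrary: A)
  case Nil
  then show ?case by (simp add: cnt_def)
next
  case (Cons X Xs)
  show ?case using Cons[of "invert X A"] by (auto simp: cnt_def invert_mem)
qed

lemma orient_fold:
  assumes "is_orientation V E A"
  shows "is_orientation V E (foldl (\<lambda>D X. invert X D) A Xs)"
proof -
  have c: "cnt Xs x y = cnt Xs y x" for x y unfolding cnt_def by (metis conj_commute)
  let ?R = "foldl (\<lambda>D X. invert X D) A Xs"
  have A1: "\<And>x y. (x,y)\<in>A \<Longrightarrow> x \<noteq> y \<and> {x,y} \<in> E"
   and A2: "\<And>x y. x \<noteq> y \<Longrightarrow> {x,y} \<in> E \<Longrightarrow> ((x,y) \<in> A \<longleftrightarrow> (y,x) \<notin> A)"
    using assms unfolding is_orientation_def by auto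
  have "(x,y)\<in>?R \<Longrightarrow> x \<noteq> y \<and> {x,y} \<in> E" for x y
    using A1[of x y] A1[of y x] by (auto simp: fold_mem insert_commute split: if_splits)
  moreover have "x \<noteq> y \<Longrightarrow> {x,y} \<in> E \<Longrightarrow> ((x,y) \<in> ?R \<longleftrightarrow> (y,x) \<notin> ?R)" for x y
    using A2[of x y] A2[of y x] c[of x y] by (auto simp: fold_mem insert_commute)
  ultimately show ?thesis unfolding is_orientation_def by auto
qed

lemma orient_restrict:
  assumes "is_orientation V E A"
  shows "is_orientation (del_vertex_V V v) (del_vertex_E E v) {(x,y)\<in>A. x\<noteq>v \<and> y\<noteq>v}"
  using assms unfolding is_orientation_def del_vertex_E_def del_vertex_V_def by auto

lemma orient_sub:
  assumes "simple_graph V E" "is_orientation V E A"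
  shows "A \<subseteq> V \<times> V"
  using assms unfolding is_orientation_def simple_graph_def by fastforce

lemma chunks:
  assumes "finite S" "m \<ge> (1::nat)"
  shows "\<exists>Ts. (\<forall>T\<in>set Ts. T \<subseteq> S \<and> card T \<le> m) \<and>
     (\<forall>u. length (filter (\<lambda>T. u\<in>T) Ts) = (if u\<in>S then 1 else 0)) \<and> length Ts * m < card S + m"
  using assms
proof (induction "card S" arbitrary: S rule: less_induct)
  case less
  show ?case
  proof (cases "S = {}")
    case True
    then show ?thesis using less by (intro exI[of _ "[]"]) auto
  next
    case ne: False
    show ?thesis
    proof (cases "card S \<le> m")
      case True
      have "card S > 0" using ne less by auto
      then show ?thesis using True by (intro exI[of _ "[S]"]) auto
    next
      case False
      then obtain T where T: "T \<subseteq> S" "card T = m"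
        by (meson less_or_eq_imp_le not_le obtain_subset_with_card_n)
      have fT: "finite T" using T less(2) finite_subset by blast
      have cS: "card (S - T) = card S - m" using T fT by (simp add: card_Diff_subset)
      have "card (S - T) < card S" using cS less(3) False by linarith
      from less(1)[OF this _ less(3)] less(2) obtain Ts where
        Ts: "\<forall>U\<in>set Ts. U \<subseteq> S - T \<and> card U \<le> m"
        "(\<forall>u. length (filter (\<lambda>U. u\<in>U) Ts) = (if u\<in>S - T then 1 else 0))"
        "length Ts * m < card (S - T) + m"
        by auto
      show ?thesis
      proof (intro exI[of _ "T # Ts"] conjI allI)
        show "\<forall>T'\<in>set (T # Ts). T' \<subseteq> S \<and> card T' \<le> m" using Ts(1) T by auto
        show "length (filter (\<lambda>T'. u\<in>T') (T # Ts)) = (if u\<in>S then 1 else 0)" for u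
          using Ts(2)[rule_format, of u] T by auto
        show "length (T # Ts) * m < card S + m" using Ts(3) cS False by simp
      qed
    qed
  qed
qed

lemma orient_facts:
  assumes "is_orientation V E A"
  shows "(x,y)\<in>A \<Longrightarrow> x \<noteq> y \<and> {x,y} \<in> E"
   and "x \<noteq> y \<Longrightarrow> {x,y} \<in> E \<Longrightarrow> ((x,y) \<in> A \<longleftrightarrow> (y,x) \<notin> A)"
  using assms unfolding is_orientation_def by auto

lemma connect:
  assumes G: "simple_graph V E" and p: "p \<ge> 2"
    and A: "is_orientation V E A" and B: "is_orientation V E B"
  shows "\<exists>Xs. (\<forall>X\<in>set Xs. X \<subseteq> V \<and> card X \<le> p) \<and> foldl (\<lambda>D X. invert X D) A Xs = B"
proof -
  define F where "F = {e\<in>E. \<exists>x y. e = {x,y} \<and> (x,y)\<in>A \<and> (x,y)\<notin>B}"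
  have fE: "finite E" using G unfolding simple_graph_def
    by (meson Pow_iff finite_Pow_iff finite_subset subsetI)
  have "finite F" unfolding F_def using fE by auto
  then obtain Xs where Xs: "set Xs = F" "distinct Xs" using finite_distinct_list by blast
  have sub: "\<forall>X\<in>set Xs. X \<subseteq> V \<and> card X \<le> p" using Xs G p unfolding F_def simple_graph_def by auto
  have key: "(x,y) \<in> foldl (\<lambda>D X. invert X D) A Xs \<longleftrightarrow> (x,y) \<in> B" for x y
  proof (cases "x = y")
    case True
    then show ?thesis using orient_facts(1)[OF A] orient_facts(1)[OF B] by (auto simp: fold_mem)
  next
    case ne: False
    have e2: "e \<in> E \<Longrightarrow> x \<in> e \<Longrightarrow> y \<in> e \<Longrightarrow> e = {x,y}" for e
    proof -
      assume "e \<in> E" "x \<in> e" "y \<in> e"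
      then have "card e = 2" "{x,y} \<subseteq> e" "finite e" using G unfolding simple_graph_def
        by (auto intro: card_ge_0_finite)
      moreover have "card {x,y} = 2" using ne by simp
      ultimately show ?thesis by (metis card_subset_eq)
    qed
    have "{e. x \<in> e \<and> y \<in> e} \<inter> set Xs = (if {x,y} \<in> F then {{x,y}} else {})"
    proof -
      have FE: "F \<subseteq> E" unfolding F_def by blast
      have H: "z \<in> F \<Longrightarrow> x\<in>z \<Longrightarrow> y\<in>z \<Longrightarrow> z = {x,y}" for z using e2 FE by blast
      show ?thesis
      proof (cases "{x,y} \<in> F")
        case True
        show ?thesis
        proof (intro equalityI subsetI)
          fix z assume "z \<in> {e. x \<in> e \<and> y \<in> e} \<inter> set Xs"
          then have "z = {x,y}" using H[of z] Xs(1) by blast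
          then show "z \<in> (if {x,y} \<in> F then {{x,y}} else {})" using True by simp
        next
          fix z assume "z \<in> (if {x,y} \<in> F then {{x,y}} else {})"
          then show "z \<in> {e. x \<in> e \<and> y \<in> e} \<inter> set Xs" using Xs(1) True by simp
        qed
      next
        case False
        show ?thesis
        proof (intro equalityI subsetI)
          fix z assume "z \<in> {e. x \<in> e \<and> y \<in> e} \<inter> set Xs"
          then have "z = {x,y}" "z \<in> F" using H[of z] Xs(1) by blast+
          then show "z \<in> (if {x,y} \<in> F then {{x,y}} else {})" using False by simp
        qed (use False in simp)
      qed
    qed
    then have c: "cnt Xs x y = (if {x,y} \<in> F then 1 else 0)"
      unfolding cnt_def using distinct_length_filter[OF Xs(2)] by simp
    show ?thesis
    proof (cases "{x,y} \<in> F")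
      case True
      then obtain a b where ab: "{x,y} = {a,b}" "(a,b)\<in>A" "(a,b)\<notin>B" "{x,y}\<in>E" unfolding F_def by auto
      then have "(a = x \<and> b = y) \<or> (a = y \<and> b = x)" by (metis doubleton_eq_iff)
      then show ?thesis using c True ab orient_facts(2)[OF A ne ab(4)] orient_facts(2)[OF B ne ab(4)]
        by (auto simp: fold_mem)
    next
      case False
      show ?thesis
      proof (cases "{x,y} \<in> E")
        case True
        have yx: "{y,x} = {x,y}" by (simp add: insert_commute)
        then show ?thesis using c False True orient_facts(2)[OF A ne True] orient_facts(2)[OF B ne True]
          unfolding F_def by (auto simp: fold_mem)
      next
        case nE: False
        then show ?thesis using c False orient_facts(1)[OF A, of x y] orient_facts(1)[OF B, of x y]
          by (auto simp: fold_mem)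
      qed
    qed
  qed
  have "foldl (\<lambda>D X. invert X D) A Xs = B" using key by auto
  then show ?thesis using sub by blast
qed

lemma orient_ex:
  assumes "simple_graph V E"
  shows "\<exists>A. is_orientation V E A"
proof -
  have fV: "finite V" using assms unfolding simple_graph_def by auto
  obtain f :: "'a \<Rightarrow> nat" and n where f: "inj_on f V" using finite_imp_inj_to_nat_seg[OF fV] by blast
  define A where "A = {(x,y). {x,y}\<in>E \<and> x\<noteq>y \<and> f x < f y}"
  have "x \<noteq> y \<Longrightarrow> {x,y} \<in> E \<Longrightarrow> f x \<noteq> f y" for x y
    using assms f unfolding simple_graph_def by (meson inj_on_contraD insert_subset)
  then have "is_orientation V E A" unfolding is_orientation_def A_def
    by (auto simp: insert_commute) (meson linorder_neqE_nat)
  then show ?thesis by blast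
qed

lemma fin_dist:
  assumes "simple_graph V E"
  shows "finite {inv_dist p V A B | A B. is_orientation V E A \<and> is_orientation V E B}"
proof -
  have fV: "finite V" using assms unfolding simple_graph_def by auto
  have "{inv_dist p V A B | A B. is_orientation V E A \<and> is_orientation V E B}
     \<subseteq> (\<lambda>(A,B). inv_dist p V A B) ` (Pow (V\<times>V) \<times> Pow (V\<times>V))"
    using orient_sub[OF assms] by fastforce
  moreover have "finite ((\<lambda>(A,B). inv_dist p V A B) ` (Pow (V\<times>V) \<times> Pow (V\<times>V)))"
    using fV by simp
  ultimately show ?thesis by (rule finite_subset)
qed

lemma simple_del:
  assumes "simple_graph V E"
  shows "simple_graph (del_vertex_V V v) (del_vertex_E E v)"
  using assms unfolding simple_graph_def del_vertex_V_def del_vertex_E_def by auto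

lemma dist_witness:
  assumes G: "simple_graph V E" and p: "p \<ge> 2"
    and A: "is_orientation V E A" and B: "is_orientation V E B"
  shows "\<exists>Xs. length Xs = inv_dist p V A B \<and> (\<forall>X\<in>set Xs. X \<subseteq> V \<and> card X \<le> p) \<and> foldl (\<lambda>D X. invert X D) A Xs = B"
proof -
  from connect[OF G p A B] obtain Xs where "(\<forall>X\<in>set Xs. X \<subseteq> V \<and> card X \<le> p) \<and> foldl (\<lambda>D X. invert X D) A Xs = B" by blast
  then have "\<exists>k. \<exists>Xs. length Xs = k \<and> (\<forall>X\<in>set Xs. X \<subseteq> V \<and> card X \<le> p) \<and> foldl (\<lambda>D X. invert X D) A Xs = B" by blast
  from LeastI_ex[OF this] show ?thesis unfolding inv_dist_def .
qed

lemma dist_le: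
  assumes "length Xs = k" "\<forall>X\<in>set Xs. X \<subseteq> V \<and> card X \<le> p" "foldl (\<lambda>D X. invert X D) A Xs = B"
  shows "inv_dist p V A B \<le> k"
  unfolding inv_dist_def using assms by (intro Least_le) blast

lemma part_i:
  assumes G: "simple_graph V E" and p: "p \<ge> 2" and vV: "v \<in> V"
    and A: "is_orientation V E A" and B: "is_orientation V E B"
  shows "real (inv_dist p V A B) \<le> real (inv_diam p (del_vertex_V V v) (del_vertex_E E v))
           + of_int \<lceil>real (degree E v) / real (p - 1)\<rceil>"
proof -
  let ?f = "\<lambda>D X. invert X D"
  let ?V' = "del_vertex_V V v" and ?E' = "del_vertex_E E v"
  define N where "N = inv_diam p ?V' ?E'"
  define S where "S = {u\<in>V. u\<noteq>v \<and> ((v,u)\<in>A \<longleftrightarrow> (v,u)\<notin>B)}"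
  have fV: "finite V" using G unfolding simple_graph_def by auto
  have fE: "finite E" using G unfolding simple_graph_def
    by (meson Pow_iff finite_Pow_iff finite_subset subsetI)
  have fS: "finite S" unfolding S_def using fV by auto
  have cardS: "card S \<le> degree E v"
  proof -
    have "inj_on (\<lambda>u. {v,u}) S" unfolding inj_on_def S_def by (auto simp: doubleton_eq_iff)
    moreover have "(\<lambda>u. {v,u}) ` S \<subseteq> {e\<in>E. v \<in> e}"
    proof
      fix e assume "e \<in> (\<lambda>u. {v,u}) ` S"
      then obtain u where u: "e = {v,u}" "u \<in> S" by blast
      then have "u \<noteq> v" "(v,u)\<in>A \<or> (v,u)\<in>B" unfolding S_def by auto
      then have "{v,u} \<in> E" using orient_facts(1)[OF A, of v u] orient_facts(1)[OF B, of v u] by auto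
      then show "e \<in> {e\<in>E. v \<in> e}" using u by auto
    qed
    moreover have "finite {e\<in>E. v \<in> e}" using fE by auto
    ultimately show ?thesis unfolding degree_def by (rule card_inj_on_le)
  qed
  have m1: "p - 1 \<ge> 1" using p by simp
  obtain Ts where Ts: "\<forall>T\<in>set Ts. T \<subseteq> S \<and> card T \<le> p - 1"
     "\<forall>u. length (filter (\<lambda>T. u\<in>T) Ts) = (if u\<in>S then 1 else 0)"
     "length Ts * (p - 1) < card S + (p - 1)"
    using chunks[OF fS m1] by blast
  define Xs1 where "Xs1 = map (insert v) Ts"
  have sub1: "\<forall>X\<in>set Xs1. X \<subseteq> V \<and> card X \<le> p"
  proof
    fix X assume "X \<in> set Xs1"
    then obtain T where T: "T \<in> set Ts" "X = insert v T" unfolding Xs1_def by auto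
    have "T \<subseteq> V" "card T \<le> p - 1" using Ts(1) T(1) unfolding S_def by auto
    moreover have "finite T" using \<open>T \<subseteq> V\<close> fV finite_subset by blast
    ultimately show "X \<subseteq> V \<and> card X \<le> p" using T(2) vV p card_insert_le[of T v]
      by (simp add: card_insert_if) linarith
  qed
  define A1 where "A1 = foldl ?f A Xs1"
  have A1o: "is_orientation V E A1" unfolding A1_def by (rule orient_fold[OF A])
  have cv: "cnt Xs1 v y = (if y \<in> S then 1 else 0)" "cnt Xs1 y v = (if y \<in> S then 1 else 0)"
    if "y \<noteq> v" for y
    using Ts(2)[rule_format, of y] that unfolding cnt_def Xs1_def by (simp_all add: filter_map comp_def)
  have atv: "(x,y)\<in>A1 \<longleftrightarrow> (x,y)\<in>B" if "x = v \<or> y = v" for x y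
  proof (cases "x = y")
    case True
    then show ?thesis using orient_facts(1)[OF A1o, of x y] orient_facts(1)[OF B, of x y] by auto
  next
    case ne: False
    show ?thesis
    proof (cases "{x,y} \<in> E")
      case False
      then show ?thesis using orient_facts(1)[OF A1o, of x y] orient_facts(1)[OF B, of x y] by auto
    next
      case True
      have xyV: "x \<in> V" "y \<in> V" using True G unfolding simple_graph_def by auto
      have yx: "{y,x} \<in> E" using True by (simp add: insert_commute)
      note o = orient_facts(2)[OF A ne True] orient_facts(2)[OF B ne True]
      show ?thesis
      proof (cases "x = v")
        case True
        then show ?thesis using cv(1)[of y] ne o xyV unfolding A1_def S_def by (auto simp: fold_mem)
      next
        case False
        then have "y = v" using that by auto
        then show ?thesis using cv(2)[of x] ne o xyV False unfolding A1_def S_def by (auto simp: fold_mem)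
      qed
    qed
  qed
  define A1' where "A1' = {(x,y)\<in>A1. x\<noteq>v \<and> y\<noteq>v}"
  define B' where "B' = {(x,y)\<in>B. x\<noteq>v \<and> y\<noteq>v}"
  have A1'o: "is_orientation ?V' ?E' A1'" unfolding A1'_def by (rule orient_restrict[OF A1o])
  have B'o: "is_orientation ?V' ?E' B'" unfolding B'_def by (rule orient_restrict[OF B])
  have G': "simple_graph ?V' ?E'" by (rule simple_del[OF G])
  have dN: "inv_dist p ?V' A1' B' \<le> N" unfolding N_def inv_diam_def
    using A1'o B'o by (intro Max_ge[OF fin_dist[OF G']]) blast
  obtain Ys where Ys: "length Ys = inv_dist p ?V' A1' B'" "\<forall>Y\<in>set Ys. Y \<subseteq> ?V' \<and> card Y \<le> p"
     "foldl ?f A1' Ys = B'"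
    using dist_witness[OF G' p A1'o B'o] by blast
  have c0: "cnt Ys x y = 0" if "x = v \<or> y = v" for x y
    using Ys(2) that unfolding cnt_def del_vertex_V_def by (auto simp: filter_empty_conv)
  have fin: "foldl ?f A (Xs1 @ Ys) = B"
  proof -
    have "(x,y) \<in> foldl ?f A1 Ys \<longleftrightarrow> (x,y) \<in> B" for x y
    proof (cases "x = v \<or> y = v")
      case True
      then show ?thesis using c0[OF True] atv[OF True] by (simp add: fold_mem)
    next
      case False
      have "(x,y) \<in> B \<longleftrightarrow> (x,y) \<in> foldl ?f A1' Ys" using Ys(3) False unfolding B'_def by auto
      also have "\<dots> \<longleftrightarrow> (x,y) \<in> foldl ?f A1 Ys" using False unfolding A1'_def by (simp add: fold_mem)
      finally show ?thesis by simp
    qed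
    then have "foldl ?f A1 Ys = B" by auto
    then show ?thesis unfolding A1_def by simp
  qed
  have "inv_dist p V A B \<le> length (Xs1 @ Ys)"
    using sub1 Ys(2) fin unfolding del_vertex_V_def by (intro dist_le[of "Xs1 @ Ys"]) auto
  then have d1: "inv_dist p V A B \<le> length Ts + N" using Ys(1) dN unfolding Xs1_def by simp
  have "int (length Ts) \<le> \<lceil>real (degree E v) / real (p - 1)\<rceil>"
  proof (subst le_ceiling_iff)
    have "real (length Ts) * real (p - 1) < real (degree E v) + real (p - 1)"
    proof -
      have "length Ts * (p - 1) < degree E v + (p - 1)" using Ts(3) cardS by linarith
      then have "real (length Ts * (p - 1)) < real (degree E v + (p - 1))" by (simp only: of_nat_less_iff)
      then show ?thesis by simp
    qed
    then have "(real (length Ts) - 1) * real (p - 1) < real (degree E v)" by (simp add: algebra_simps)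
    moreover have "real (p - 1) > 0" using p by simp
    ultimately show "of_int (int (length Ts)) - 1 < real (degree E v) / real (p - 1)"
      by (simp add: pos_less_divide_eq)
  qed
  then have "real (length Ts) \<le> of_int \<lceil>real (degree E v) / real (p - 1)\<rceil>"
    by (metis of_int_le_iff of_int_of_nat_eq)
  moreover have "real (inv_dist p V A B) \<le> real (length Ts) + real N" using d1
    by (metis of_nat_add of_nat_mono)
  ultimately show ?thesis unfolding N_def by linarith
qed

lemma arith_ii:
  fixes p d :: nat
  assumes p: "p \<ge> 2" and dq: "d \<ge> p div 2"
  shows "\<lceil>real d / real (p - 1)\<rceil> \<le> \<lfloor>real d / real (p div 2)\<rfloor>"
proof -
  define q where "q = p div 2"
  define a where "a = d div q"
  have q1: "q \<ge> 1" using p unfolding q_def by simp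
  have "q div q \<le> d div q" using dq unfolding q_def by (rule div_le_mono)
  then have a1: "a \<ge> 1" using q1 unfolding a_def by simp
  have p1: "p - 1 \<ge> 2 * q - 1" unfolding q_def by simp
  have "d = a * q + d mod q" unfolding a_def by simp
  moreover have "d mod q \<le> q - 1" using mod_less_divisor[of q d] q1 by linarith
  moreover have "q - 1 \<le> a * (q - 1)" using a1 by simp
  moreover have "a * (2 * q - 1) = a * q + a * (q - 1)" using q1 by (simp add: algebra_simps)
  moreover have "a * (2 * q - 1) \<le> a * (p - 1)" using p1 by simp
  ultimately have "d \<le> a * (p - 1)" by linarith
  then have "real d \<le> real a * real (p - 1)" by (metis of_nat_mono of_nat_mult)
  moreover have "real (p - 1) > 0" using p by simp
  ultimately have "real d / real (p - 1) \<le> real a" by (simp add: divide_le_eq)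
  then have "\<lceil>real d / real (p - 1)\<rceil> \<le> int a" by (simp add: ceiling_le_iff)
  moreover have "\<lfloor>real d / real q\<rfloor> = int a" unfolding a_def
    using floor_divide_of_nat_eq[of d q] by simp
  ultimately show ?thesis unfolding q_def by simp
qed

theorem mainTheorem13:
  fixes p :: nat and V :: "'a set" and E :: "'a set set" and v :: 'a
  assumes "p \<ge> 2" and "simple_graph V E" and "v \<in> V"
  defines "q \<equiv> p div 2"
  shows "real (inv_diam p V E) \<le> real (inv_diam p (del_vertex_V V v) (del_vertex_E E v))
           + of_int \<lceil>real (degree E v) / real (p - 1)\<rceil>
         \<and> (degree E v \<ge> q \<longrightarrow>
         real (inv_diam p V E) \<le> real (inv_diam p (del_vertex_V V v) (del_vertex_E E v))
           + of_int \<lfloor>real (degree E v) / real q\<rfloor>)"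
proof -
  define M where "M = {inv_dist p V A B | A B. is_orientation V E A \<and> is_orientation V E B}"
  obtain A0 where "is_orientation V E A0" using orient_ex[OF assms(2)] by blast
  then have "M \<noteq> {}" unfolding M_def by blast
  then have "Max M \<in> M" using fin_dist[OF assms(2)] unfolding M_def by (intro Max_in) auto
  then obtain A B where AB: "is_orientation V E A" "is_orientation V E B" "inv_diam p V E = inv_dist p V A B"
    unfolding M_def inv_diam_def by auto
  have i: "real (inv_diam p V E) \<le> real (inv_diam p (del_vertex_V V v) (del_vertex_E E v))
           + of_int \<lceil>real (degree E v) / real (p - 1)\<rceil>"
    using part_i[OF assms(2,1,3) AB(1,2)] AB(3) by simp
  show ?thesis
  proof (intro conjI impI)
    show "real (inv_diam p V E) \<le> real (inv_diam p (del_vertex_V V v) (del_vertex_E E v))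
           + of_int \<lceil>real (degree E v) / real (p - 1)\<rceil>" by (rule i)
    assume "degree E v \<ge> q"
    then have "\<lceil>real (degree E v) / real (p - 1)\<rceil> \<le> \<lfloor>real (degree E v) / real q\<rfloor>"
      using arith_ii[OF assms(1)] unfolding q_def by blast
    then show "real (inv_diam p V E) \<le> real (inv_diam p (del_vertex_V V v) (del_vertex_E E v))
           + of_int \<lfloor>real (degree E v) / real q\<rfloor>" using i
      by (smt (verit) of_int_le_iff)
  qed
qed

end
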